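(* Let $M\in\mathcal{I}$. Then $2\in M$ or $M$ is unbounded.
   Context: For a summable sequence $\mathbf{x}=(x_n)$ of positive reals, $\mathcal{A}(\mathbf{x})=\{\sum_{n\in A}x_n: A\subseteq\mathbb{N}\}$ is its achievement set and its cardinal function $f$ assigns to $x\in\mathcal{A}(\mathbf{x})$ the cardinality (a positive integer, $\omega$, or $\mathfrak{c}$) of $\{(\varepsilon_n)\in\{0,1\}^{\mathbb{N}}:\sum\varepsilon_nx_n=x\}$. $\mathcal{I}$ is the family of ranges of cardinal functions of such sequences whose achievement set is a finite union of (nondegenerate) closed intervals. A set $M\subseteq\{1,2,\dots\}\cup\{\omega,\mathfrak{c}\}$ is bounded if there is $N\in\mathbb{N}$ with $M\subseteq\{1,\dots,N\}$; otherwise it is unbounded. *)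

theory Defs
  imports "HOL-Analysis.Analysis"
begin

text \<open>Cardinal values: a positive integer, omega, or continuum.\<close>
datatype cardval = Fin nat | Omega | Cont

text \<open>Subsum of x over the index set A (A corresponds to the 0-1 sequence eps).\<close>
definition subsum :: "(nat \<Rightarrow> real) \<Rightarrow> nat set \<Rightarrow> real" where
  "subsum x A = (\<Sum>n. (if n \<in> A then x n else 0))"

definition achievement_set :: "(nat \<Rightarrow> real) \<Rightarrow> real set" where
  "achievement_set x = {subsum x A | A. True}"

definition cardv :: "'a set \<Rightarrow> cardval" where
  "cardv S = (if finite S then Fin (card S) else if countable S then Omega else Cont)"

definition cardinal_fun :: "(nat \<Rightarrow> real) \<Rightarrow> real \<Rightarrow> cardval" where
  "cardinal_fun x t = cardv {A :: nat set. subsum x A = t}"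

definition finite_union_of_intervals :: "real set \<Rightarrow> bool" where
  "finite_union_of_intervals S \<longleftrightarrow>
     (\<exists>F :: (real \<times> real) set. finite F \<and> (\<forall>(a,b)\<in>F. a < b) \<and>
        S = (\<Union>(a,b)\<in>F. {a..b}))"

definition I_family :: "cardval set set" where
  "I_family = {cardinal_fun x ` achievement_set x | x.
      (\<forall>n. x n > 0) \<and> summable x \<and> finite_union_of_intervals (achievement_set x)}"

definition bounded_cv :: "cardval set \<Rightarrow> bool" where
  "bounded_cv M \<longleftrightarrow> (\<exists>N::nat. M \<subseteq> Fin ` {1..N})"

end

theory Submission
  imports Defs
begin

locale posseq =
  fixes y :: "nat \<Rightarrow> real"
  assumes pos: "\<And>n. y n > 0" and summ: "summable y"
begin

lemma ss_summable: "summable (\<lambda>n. if n \<in> A then y n else 0)"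
  by (rule summable_comparison_test'[OF summ, of 0]) (auto simp: less_imp_le[OF pos])

lemma ss_nonneg: "subsum y A \<ge> 0"
  unfolding subsum_def by (rule suminf_nonneg[OF ss_summable]) (auto simp: less_imp_le[OF pos])

lemma ss_mono: "A \<subseteq> B \<Longrightarrow> subsum y A \<le> subsum y B"
  unfolding subsum_def by (rule suminf_le[OF _ ss_summable ss_summable]) (auto simp: less_imp_le[OF pos])

lemma ss_insert: assumes "p \<notin> A" shows "subsum y (insert p A) = y p + subsum y A"
proof -
  have e: "(\<lambda>n. if n \<in> insert p A then y n else 0) = (\<lambda>n. (if n = p then y n else 0) + (if n \<in> A then y n else 0))"
    using assms by auto
  have "subsum y (insert p A) = (\<Sum>n. (if n = p then y n else 0)) + (\<Sum>n. (if n \<in> A then y n else 0))"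
    unfolding subsum_def e by (rule suminf_add[symmetric]) (auto intro: sums_summable[OF sums_single] ss_summable)
  also have "(\<Sum>n. (if n = p then y n else 0)) = y p" using sums_single[of p y] sums_unique by metis
  finally show ?thesis unfolding subsum_def by simp
qed

lemma ss_empty: "subsum y {} = 0" unfolding subsum_def by simp

lemma ss_single: "subsum y {p} = y p" using ss_insert[of p "{}"] ss_empty by simp

lemma ss_elem: "m \<in> A \<Longrightarrow> y m \<le> subsum y A"
  using ss_mono[of "{m}" A] ss_single by auto

lemma ss_strict: assumes "A \<subseteq> B" "m \<in> B" "m \<notin> A" shows "subsum y A + y m \<le> subsum y B"
  using ss_mono[of "insert m A" B] ss_insert[of m A] assms by auto

definition R where "R m = subsum y {m..}"

lemma R_Suc: "R m = y m + R (Suc m)"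
proof -
  have "{m..} = insert m {Suc m..}" by auto
  thus ?thesis unfolding R_def using ss_insert[of m "{Suc m..}"] by auto
qed

lemma R_anti: "m \<le> m' \<Longrightarrow> R m' \<le> R m"
  unfolding R_def by (rule ss_mono) auto

lemma R_pos: "R m > 0" using ss_elem[of m "{m..}"] pos[of m] unfolding R_def by auto

lemma R_eq: "R m = suminf y - (\<Sum>i<m. y i)"
proof -
  have e: "y = (\<lambda>n. (if n \<in> {m..} then y n else 0) + (if n < m then y n else 0))" by auto
  have fs: "(\<Sum>n. (if n < m then y n else 0)) = (\<Sum>i<m. y i)"
    by (subst suminf_finite[of "{..<m}"]) auto
  have "suminf y = R m + (\<Sum>n. (if n < m then y n else 0))"
    unfolding R_def subsum_def
    apply (subst e) apply (rule suminf_add[symmetric])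
    using ss_summable[of "{m..}"] ss_summable[of "{..<m}"] by auto
  with fs show ?thesis by simp
qed

lemma R_lim: "R \<longlonglongrightarrow> 0"
proof -
  have "(\<lambda>m. suminf y - (\<Sum>i<m. y i)) \<longlonglongrightarrow> suminf y - suminf y"
    by (intro tendsto_intros summable_LIMSEQ summ)
  moreover have "R = (\<lambda>m. suminf y - (\<Sum>i<m. y i))" using R_eq by auto
  ultimately show ?thesis by simp
qed

lemma kakeya:
  assumes slow: "\<And>m. m \<ge> n \<Longrightarrow> y m \<le> R (Suc m)" and t0: "0 \<le> t" and tR: "t \<le> R n"
  shows "\<exists>C \<subseteq> {n..}. subsum y C = t"
proof -
  define s where "s = rec_nat 0 (\<lambda>m v. v + (if n \<le> m \<and> v + y m \<le> t then y m else 0))"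
  have s0: "s 0 = 0" and sS: "\<And>m. s (Suc m) = s m + (if n \<le> m \<and> s m + y m \<le> t then y m else 0)"
    unfolding s_def by auto
  define C where "C = {m. n \<le> m \<and> s m + y m \<le> t}"
  have ssum: "s m = (\<Sum>i<m. if i \<in> C then y i else 0)" for m
    by (induction m) (simp_all add: s0 sS C_def)
  have nC: "i \<notin> C" if "i < n" for i using that unfolding C_def by auto
  have sn: "s n = 0" unfolding ssum[of n] using nC by simp
  have inv: "s m \<le> t \<and> t \<le> s m + R m" if "n \<le> m" for m
    using that
  proof (induction m rule: dec_induct)
    case base then show ?case using sn t0 tR by simp
  next
    case (step m)
    show ?case
    proof (cases "s m + y m \<le> t")
      case True
      then show ?thesis using step R_Suc[of m] by (simp add: sS)
    next
      case False
      then show ?thesis using step slow[of m] by (simp add: sS)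
    qed
  qed
  have lim1: "s \<longlonglongrightarrow> subsum y C"
    unfolding subsum_def ssum[abs_def] by (rule summable_LIMSEQ[OF ss_summable])
  have lim2: "s \<longlonglongrightarrow> t"
  proof (rule tendsto_sandwich[of "\<lambda>m. t - R m" _ _ "\<lambda>_. t"])
    show "\<forall>\<^sub>F m in sequentially. t - R m \<le> s m" using inv
      by (auto simp: eventually_at_top_linorder intro!: exI[of _ n]) (smt (verit) inv)
    show "\<forall>\<^sub>F m in sequentially. s m \<le> t" using inv
      by (auto simp: eventually_at_top_linorder intro!: exI[of _ n])
    show "(\<lambda>m. t - R m) \<longlonglongrightarrow> t" using tendsto_diff[OF tendsto_const R_lim, of t] by simp
  qed auto
  have "subsum y C = t" using LIMSEQ_unique[OF lim1 lim2] .
  moreover have "C \<subseteq> {n..}" unfolding C_def by auto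
  ultimately show ?thesis by blast
qed

definition good :: "nat \<Rightarrow> nat \<Rightarrow> real \<Rightarrow> real \<Rightarrow> bool" where
  "good j n a b \<longleftrightarrow> (\<forall>t. a \<le> t \<and> t \<le> b \<longrightarrow> (\<exists>S. finite S \<and> card S = j \<and> (\<forall>C\<in>S. C \<subseteq> {n..} \<and> subsum y C = t)))"

lemma cardv_Fin: "cardv S = Fin k \<Longrightarrow> finite S \<and> card S = k"
  unfolding cardv_def by (auto split: if_splits)

lemma sorted_main:
  assumes anti: "\<And>m n. m \<le> n \<Longrightarrow> y n \<le> y m"
    and d0: "\<delta> > 0" and dE: "{0..\<delta>} \<subseteq> achievement_set y"
  shows "Fin 2 \<in> cardinal_fun y ` achievement_set y \<or> \<not> bounded_cv (cardinal_fun y ` achievement_set y)"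
proof -
  have "y \<longlonglongrightarrow> 0" by (rule summable_LIMSEQ_zero[OF summ])
  from order_tendstoD(2)[OF this d0] obtain K where K: "\<And>n. n \<ge> K \<Longrightarrow> y n < \<delta>"
    unfolding eventually_sequentially by blast
  have slow: "y n \<le> R (Suc n)" if "n \<ge> K" for n
  proof (rule ccontr)
    assume "\<not> ?thesis"
    hence lt: "R (Suc n) < y n" by simp
    define t where "t = (R (Suc n) + y n) / 2"
    have t1: "R (Suc n) < t" "t < y n" using lt unfolding t_def by auto
    have "t \<in> {0..\<delta>}" using t1 R_pos[of "Suc n"] K[OF that] by auto
    then obtain A where A: "subsum y A = t" using dE unfolding achievement_set_def by auto
    have "A \<subseteq> {Suc n..}"
    proof
      fix m assume "m \<in> A"
      show "m \<in> {Suc n..}"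
      proof (rule ccontr)
        assume "m \<notin> {Suc n..}" hence "m \<le> n" by auto
        hence "y n \<le> y m" by (rule anti)
        moreover have "y m \<le> t" using ss_elem[OF \<open>m \<in> A\<close>] A by simp
        ultimately show False using t1 by simp
      qed
    qed
    hence "t \<le> R (Suc n)" using ss_mono A unfolding R_def by blast
    thus False using t1 by simp
  qed
  have kak: "\<exists>C \<subseteq> {n..}. subsum y C = t" if "n \<ge> K" "0 \<le> t" "t \<le> R n" for n t
    by (rule kakeya) (use that slow in auto)
  show ?thesis
  proof (cases "\<forall>n. \<exists>p \<ge> n. y p < R (Suc p)")
    case True
    have P: "\<forall>n \<ge> K. \<forall>\<epsilon>>0. \<exists>a b. 0 \<le> a \<and> a < b \<and> b \<le> \<epsilon> \<and> b \<le> R n \<and> good j n a b" for j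
    proof (induction j)
      case 0
      show ?case
      proof (intro allI impI)
        fix n :: nat and \<epsilon> :: real assume "n \<ge> K" "\<epsilon> > 0"
        show "\<exists>a b. 0 \<le> a \<and> a < b \<and> b \<le> \<epsilon> \<and> b \<le> R n \<and> good 0 n a b"
          by (rule exI[of _ 0], rule exI[of _ "min \<epsilon> (R n)"])
             (use R_pos[of n] \<open>\<epsilon> > 0\<close> in \<open>auto simp: good_def intro: exI[of _ "{}"]\<close>)
      qed
    next
      case (Suc j)
      show ?case
      proof (intro allI impI)
        fix n :: nat and \<epsilon> :: real assume n: "n \<ge> K" and e: "\<epsilon> > 0"
        obtain m0 where m0: "\<And>m. m \<ge> m0 \<Longrightarrow> R m < \<epsilon>"
          using order_tendstoD(2)[OF R_lim e] unfolding eventually_sequentially by blast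
        obtain p where p: "p \<ge> max (Suc n) m0" "y p < R (Suc p)" using True by blast
        have pK: "Suc p \<ge> K" using p n by auto
        moreover have "R (Suc p) - y p > 0" using p by simp
        ultimately obtain a b where ab: "0 \<le> a" "a < b" "b \<le> R (Suc p) - y p" "b \<le> R (Suc p)" "good j (Suc p) a b"
          using Suc.IH by blast
        show "\<exists>a b. 0 \<le> a \<and> a < b \<and> b \<le> \<epsilon> \<and> b \<le> R n \<and> good (Suc j) n a b"
        proof (intro exI conjI)
          show "0 \<le> a + y p" using ab pos[of p] by simp
          show "a + y p < b + y p" using ab by simp
          have "R (Suc p) < \<epsilon>" using m0 p by auto
          thus "b + y p \<le> \<epsilon>" using ab by simp
          have "R (Suc p) \<le> R n" using R_anti p by auto
          thus "b + y p \<le> R n" using ab by simp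
          show "good (Suc j) n (a + y p) (b + y p)"
            unfolding good_def
          proof (intro allI impI)
            fix t assume t: "a + y p \<le> t \<and> t \<le> b + y p"
            have tt: "a \<le> t - y p \<and> t - y p \<le> b" using t by simp
            have "\<exists>S. finite S \<and> card S = j \<and> (\<forall>C\<in>S. C \<subseteq> {Suc p..} \<and> subsum y C = t - y p)"
              using ab(5)[unfolded good_def, rule_format, OF tt] .
            then obtain S where S: "finite S" "card S = j" "\<And>C. C \<in> S \<Longrightarrow> C \<subseteq> {Suc p..} \<and> subsum y C = t - y p"
              by blast
            have t0: "0 \<le> t" using t ab(1) pos[of p] by linarith
            have tR: "t \<le> R (Suc p)" using t ab(3) by linarith
            obtain D where D: "D \<subseteq> {Suc p..}" "subsum y D = t"
              using kak[OF pK t0 tR] by blast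
            have pnot: "p \<notin> C" if "C \<in> S" for C using S(3)[OF that] by auto
            have inj: "inj_on (insert p) S"
              proof (rule inj_onI)
              fix C C' assume c: "C \<in> S" "C' \<in> S" "insert p C = insert p C'"
              show "C = C'" using c(3) insert_ident[OF pnot[OF c(1)] pnot[OF c(2)]] by simp
            qed
            have Dn: "D \<notin> insert p ` S" using D(1) by auto
            show "\<exists>S'. finite S' \<and> card S' = Suc j \<and> (\<forall>C\<in>S'. C \<subseteq> {n..} \<and> subsum y C = t)"
            proof (intro exI conjI)
              show "finite (insert D (insert p ` S))" using S by simp
              show "card (insert D (insert p ` S)) = Suc j" using S Dn card_image[OF inj] by simp
              show "\<forall>C\<in>insert D (insert p ` S). C \<subseteq> {n..} \<and> subsum y C = t"
              proof
                fix C assume "C \<in> insert D (insert p ` S)"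
                then consider "C = D" | C' where "C' \<in> S" "C = insert p C'" by auto
                then show "C \<subseteq> {n..} \<and> subsum y C = t"
                proof cases
                  case 1 then show ?thesis using D p by auto
                next
                  case 2 then show ?thesis using S(3)[OF 2(1)] ss_insert[OF pnot[OF 2(1)]] p by auto
                qed
              qed
            qed
          qed
        qed
      qed
    qed
    show ?thesis
    proof (rule disjI2, rule notI)
      assume "bounded_cv (cardinal_fun y ` achievement_set y)"
      then obtain N where N: "cardinal_fun y ` achievement_set y \<subseteq> Fin ` {1..N}" unfolding bounded_cv_def by blast
      obtain a b where ab: "0 \<le> a" "a < b" "good (Suc N) K a b" using P[of "Suc N"] by (metis order.refl zero_less_one)
      then obtain S where S: "finite S" "card S = Suc N" "\<And>C. C \<in> S \<Longrightarrow> subsum y C = a" unfolding good_def by auto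
      then obtain C where "C \<in> S" by (metis card.empty ex_in_conv nat.distinct(1))
      hence aE: "a \<in> achievement_set y" using S unfolding achievement_set_def by auto
      then obtain k where k: "cardinal_fun y a = Fin k" "k \<le> N" using N by auto
      hence fin: "finite {A. subsum y A = a}" "card {A. subsum y A = a} = k" unfolding cardinal_fun_def using cardv_Fin by blast+
      have "S \<subseteq> {A. subsum y A = a}" using S by auto
      hence "card S \<le> k" using card_mono fin by metis
      thus False using S k by simp
    qed
  next
    case False
    then obtain n0 where n0: "\<And>p. p \<ge> n0 \<Longrightarrow> \<not> y p < R (Suc p)" by auto
    define N0 where "N0 = max n0 K"
    have eq: "y p = R (Suc p)" if "p \<ge> N0" for p proof -
      have "p \<ge> n0" "p \<ge> K" using that unfolding N0_def by auto
      thus ?thesis using n0[of p] slow[of p] by linarith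
    qed
    define t where "t = y (Suc N0)"
    have lt: "t < y N0" using eq[of N0] R_Suc[of "Suc N0"] R_pos[of "Suc (Suc N0)"] unfolding t_def by simp
    have Rt: "R (Suc (Suc N0)) = t" using eq[of "Suc N0"] unfolding t_def by simp
    have reps: "{A. subsum y A = t} = {{Suc N0}, {Suc (Suc N0)..}}"
    proof (intro equalityI subsetI)
      fix A assume "A \<in> {A. subsum y A = t}"
      hence A: "subsum y A = t" by simp
      have sub: "A \<subseteq> {Suc N0..}"
      proof
        fix m assume m: "m \<in> A"
        show "m \<in> {Suc N0..}"
        proof (rule ccontr)
          assume "m \<notin> {Suc N0..}" hence "y N0 \<le> y m" using anti by auto
          moreover have "y m \<le> t" using ss_elem[OF m] A by simp
          ultimately show False using lt by simp
        qed
      qed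
      show "A \<in> {{Suc N0}, {Suc (Suc N0)..}}"
      proof (cases "Suc N0 \<in> A")
        case True
        have "A = {Suc N0}"
        proof (rule ccontr)
          assume "A \<noteq> {Suc N0}"
          then obtain m where m: "m \<in> A" "m \<noteq> Suc N0" using True by blast
          have "subsum y {Suc N0} + y m \<le> subsum y A" by (rule ss_strict) (use m True in auto)
          thus False using A pos[of m] ss_single unfolding t_def by simp
        qed
        thus ?thesis by simp
      next
        case False
        hence sub2: "A \<subseteq> {Suc (Suc N0)..}" using sub by (metis atLeast_iff not_less_eq_eq le_antisym subset_iff)
        have "A = {Suc (Suc N0)..}"
        proof (rule ccontr)
          assume "A \<noteq> {Suc (Suc N0)..}"
          then obtain m where m: "m \<in> {Suc (Suc N0)..}" "m \<notin> A" using sub2 by blast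
          have "subsum y A + y m \<le> R (Suc (Suc N0))" unfolding R_def by (rule ss_strict) (use m sub2 in auto)
          thus False using A Rt pos[of m] by simp
        qed
        thus ?thesis by simp
      qed
    next
      fix A assume "A \<in> {{Suc N0}, {Suc (Suc N0)..}}"
      thus "A \<in> {A. subsum y A = t}" using ss_single Rt unfolding R_def t_def by auto
    qed
    have ne: "{Suc N0} \<noteq> {Suc (Suc N0)..}"
    proof
      assume "{Suc N0} = {Suc (Suc N0)..}"
      hence "Suc N0 \<in> {Suc (Suc N0)..}" by (metis singletonI)
      thus False by simp
    qed
    have "cardinal_fun y t = Fin 2" unfolding cardinal_fun_def reps cardv_def using ne by simp
    moreover have "t \<in> achievement_set y" unfolding achievement_set_def t_def using ss_single[of "Suc N0"] by (metis (mono_tags, lifting) mem_Collect_eq)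
    ultimately show ?thesis by (intro disjI1 image_eqI[where x=t]) auto
  qed
qed

end

lemma cardv_inj: "inj_on f S \<Longrightarrow> cardv (f ` S) = cardv S"
  unfolding cardv_def using finite_image_iff[of f S] card_image[of f S] countable_image[of S f] countable_image_inj_on[of f S] by auto

lemma sort_exists:
  fixes x :: "nat \<Rightarrow> real"
  assumes pos: "\<And>n. x n > 0" and lim: "x \<longlonglongrightarrow> 0"
  shows "\<exists>\<sigma>::nat\<Rightarrow>nat. bij \<sigma> \<and> (\<forall>m n::nat. m \<le> n \<longrightarrow> x (\<sigma> n) \<le> x (\<sigma> m))"
proof -
  define bef where "bef a b \<longleftrightarrow> x b < x a \<or> (x a = x b \<and> a < b)" for a b
  define P where "P b = {a. bef a b}" for b
  have finP: "finite (P b)" for b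
  proof -
    from order_tendstoD(2)[OF lim pos[of b]] obtain N where N: "\<And>n. n \<ge> N \<Longrightarrow> x n < x b"
      unfolding eventually_sequentially by blast
    have "P b \<subseteq> {..<N}"
    proof
      fix a assume "a \<in> P b"
      hence "x b \<le> x a" unfolding P_def bef_def by auto
      thus "a \<in> {..<N}" using N[of a] by (cases "a < N") auto
    qed
    thus ?thesis using finite_subset by blast
  qed
  have trans: "bef a c" if "bef a b" "bef b c" for a b c using that unfolding bef_def by auto
  have irr: "\<not> bef a a" for a unfolding bef_def by auto
  have tot: "bef a b \<or> bef b a" if "a \<noteq> b" for a b using that unfolding bef_def by auto
  define rk where "rk b = card (P b)" for b
  have rk_less: "rk a < rk b" if ab: "bef a b" for a b
  proof -
    have "P a \<subseteq> P b" unfolding P_def using ab trans by blast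
    moreover have "a \<in> P b" "a \<notin> P a" unfolding P_def using ab irr by auto
    ultimately have "P a \<subset> P b" by blast
    thus ?thesis unfolding rk_def using psubset_card_mono finP by blast
  qed
  have inj: "inj rk"
  proof (rule injI)
    fix a b assume "rk a = rk b" thus "a = b" using tot rk_less by (metis less_irrefl)
  qed
  have surj: "surj rk"
  proof -
    have "k \<in> range rk" for k
    proof -
      have "infinite (range rk)" using inj finite_imageD infinite_UNIV_nat by blast
      then obtain n where "n > k" "n \<in> range rk" using infinite_nat_iff_unbounded by blast
      then obtain b where b: "rk b > k" by auto
      have sub: "rk ` P b \<subseteq> {..<rk b}" using rk_less unfolding P_def by auto
      have "card (rk ` P b) = rk b" using card_image[OF inj_on_subset[OF inj subset_UNIV]] unfolding rk_def by simp
      hence "rk ` P b = {..<rk b}" using sub by (intro card_subset_eq) auto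
      thus ?thesis using b by auto
    qed
    thus ?thesis by auto
  qed
  have bij: "bij rk" using inj surj by (simp add: bij_def)
  define \<sigma> where "\<sigma> = inv rk"
  have rs: "rk (\<sigma> k) = k" for k unfolding \<sigma>_def using surj by (simp add: surj_f_inv_f)
  show ?thesis
  proof (intro exI conjI allI impI)
    show "bij \<sigma>" unfolding \<sigma>_def using bij by (simp add: bij_imp_bij_inv)
    fix m n :: nat assume mn: "m \<le> n"
    show "x (\<sigma> n) \<le> x (\<sigma> m)"
    proof (cases "m = n")
      case False
      hence "\<sigma> m \<noteq> \<sigma> n" using rs by metis
      moreover have "\<not> bef (\<sigma> n) (\<sigma> m)" using rk_less[of "\<sigma> n" "\<sigma> m"] rs mn by auto
      ultimately have "bef (\<sigma> m) (\<sigma> n)" using tot by blast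
      thus ?thesis unfolding bef_def by auto
    qed simp
  qed
qed

lemma infsum_suminf_nonneg:
  fixes f :: "nat \<Rightarrow> real"
  assumes "\<And>n. f n \<ge> 0" "summable f"
  shows "infsum f UNIV = suminf f"
proof -
  have "(f has_sum suminf f) UNIV"
    by (rule sums_nonneg_imp_has_sum_strong[OF summable_sums[OF assms(2)]]) (use assms(1) in auto)
  thus ?thesis by (rule infsumI)
qed

lemma transport:
  fixes x :: "nat \<Rightarrow> real" and \<sigma> :: "nat \<Rightarrow> nat"
  assumes pos: "\<And>n. x n > 0" and summ: "summable x" and bij: "bij \<sigma>"
  shows "summable (\<lambda>k. x (\<sigma> k))" "subsum x A = subsum (\<lambda>k. x (\<sigma> k)) (\<sigma> -` A)"
proof -
  have "x summable_on UNIV" using summable_on_UNIV_nonneg_real_iff[of x] pos summ by (simp add: less_imp_le)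
  hence "(\<lambda>k. x (\<sigma> k)) summable_on UNIV"
    using summable_on_reindex_bij_betw[of \<sigma> UNIV UNIV x] bij by simp
  thus sy: "summable (\<lambda>k. x (\<sigma> k))" by (rule summable_on_imp_summable)
  define g where "g n = (if n \<in> A then x n else 0)" for n
  have g0: "g n \<ge> 0" for n unfolding g_def using pos[of n] by auto
  have gs: "summable g" unfolding g_def
    by (rule summable_comparison_test'[OF summ, of 0]) (auto simp: less_imp_le[OF pos])
  have gs2: "summable (\<lambda>k. g (\<sigma> k))" unfolding g_def
    by (rule summable_comparison_test'[OF sy, of 0]) (auto simp: less_imp_le[OF pos])
  have "subsum x A = suminf g" unfolding subsum_def g_def by simp
  also have "\<dots> = infsum g UNIV" using infsum_suminf_nonneg[OF g0 gs] by simp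
  also have "\<dots> = infsum (\<lambda>k. g (\<sigma> k)) UNIV" using infsum_reindex_bij_betw[of \<sigma> UNIV UNIV g] bij by simp
  also have "\<dots> = suminf (\<lambda>k. g (\<sigma> k))" using infsum_suminf_nonneg[OF _ gs2] g0 by simp
  also have "\<dots> = subsum (\<lambda>k. x (\<sigma> k)) (\<sigma> -` A)" unfolding subsum_def g_def by (simp add: o_def)
  finally show "subsum x A = subsum (\<lambda>k. x (\<sigma> k)) (\<sigma> -` A)" .
qed

theorem theorem6p1:
  assumes "M \<in> I_family"
  shows "Fin 2 \<in> M \<or> \<not> bounded_cv M"
proof -
  have "\<exists>x. M = cardinal_fun x ` achievement_set x \<and> (\<forall>n. x n > 0) \<and> summable x \<and> finite_union_of_intervals (achievement_set x)"
    using assms unfolding I_family_def by (simp only: mem_Collect_eq)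
  then obtain x where M: "M = cardinal_fun x ` achievement_set x" and pos': "\<forall>n. x n > 0" and s: "summable x"
    and fu: "finite_union_of_intervals (achievement_set x)"
    by (elim exE conjE)
  have pos: "\<And>n. x n > 0" using pos' by blast
  have "x \<longlonglongrightarrow> 0" by (rule summable_LIMSEQ_zero[OF s])
  from sort_exists[OF pos this] obtain \<sigma> :: "nat \<Rightarrow> nat" where bij: "bij \<sigma>" and mono': "\<forall>m n::nat. m \<le> n \<longrightarrow> x (\<sigma> n) \<le> x (\<sigma> m)"
    by blast
  have mono: "\<And>m n. m \<le> n \<Longrightarrow> x (\<sigma> n) \<le> x (\<sigma> m)" using mono' by blast
  define y where "y = (\<lambda>k. x (\<sigma> k))"
  have ypos: "\<And>n. y n > 0" unfolding y_def using pos by simp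
  have ys: "summable y" unfolding y_def using transport(1)[OF pos s bij] .
  have tr: "subsum x A = subsum y (\<sigma> -` A)" for A unfolding y_def using transport(2)[OF pos s bij] .
  have vi: "\<sigma> -` (\<sigma> ` B) = B" for B using bij by (simp add: bij_def inj_vimage_image_eq)
  have iv: "\<sigma> ` (\<sigma> -` A) = A" for A using bij by (simp add: bij_def surj_image_vimage_eq)
  have AE: "achievement_set y = achievement_set x"
  proof -
    have "subsum y B = subsum x (\<sigma> ` B)" for B using tr[of "\<sigma> ` B"] vi by simp
    thus ?thesis unfolding achievement_set_def using tr by blast
  qed
  have CF: "cardinal_fun y t = cardinal_fun x t" for t
  proof -
    have inj: "inj_on (\<lambda>A. \<sigma> -` A) X" for X by (rule inj_onI) (metis iv)
    have "{B. subsum y B = t} = (\<lambda>A. \<sigma> -` A) ` {A. subsum x A = t}"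
    proof (intro equalityI subsetI)
      fix B assume "B \<in> {B. subsum y B = t}"
      hence "subsum x (\<sigma> ` B) = t" using tr[of "\<sigma> ` B"] vi by simp
      moreover have "B = \<sigma> -` (\<sigma> ` B)" using vi by simp
      ultimately show "B \<in> (\<lambda>A. \<sigma> -` A) ` {A. subsum x A = t}" by blast
    next
      fix B assume "B \<in> (\<lambda>A. \<sigma> -` A) ` {A. subsum x A = t}"
      thus "B \<in> {B. subsum y B = t}" using tr by auto
    qed
    thus ?thesis unfolding cardinal_fun_def using cardv_inj[OF inj] by simp
  qed
  interpret X: posseq x using pos s by unfold_locales auto
  interpret Y: posseq y using ypos ys by unfold_locales auto
  obtain F where F: "finite F" "\<forall>(a,b)\<in>F. a < b" "achievement_set x = (\<Union>(a,b)\<in>F. {a..b})"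
    using fu unfolding finite_union_of_intervals_def by blast
  have "0 \<in> achievement_set x" unfolding achievement_set_def using X.ss_empty by (metis (mono_tags, lifting) mem_Collect_eq)
  then obtain a b where ab: "(a,b) \<in> F" "0 \<in> {a..b}" using F(3) by auto
  have altb: "a < b" using F(2) ab(1) by auto
  have ab_sub: "{a..b} \<subseteq> achievement_set x" unfolding F(3)
  proof
    fix t assume "t \<in> {a..b}"
    thus "t \<in> (\<Union>(a,b)\<in>F. {a..b})" using ab(1) by (intro UN_I[of "(a,b)"]) auto
  qed
  have "a \<in> achievement_set x" using ab_sub altb by auto
  hence "a \<ge> 0" unfolding achievement_set_def using X.ss_nonneg by auto
  hence a0: "a = 0" using ab(2) by simp
  have dE: "{0..b} \<subseteq> achievement_set y" using AE ab_sub a0 by auto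
  have b0: "b > 0" using altb a0 by simp
  have "Fin 2 \<in> cardinal_fun y ` achievement_set y \<or> \<not> bounded_cv (cardinal_fun y ` achievement_set y)"
    by (rule Y.sorted_main[OF _ b0 dE]) (simp add: y_def mono)
  moreover have "cardinal_fun y ` achievement_set y = M" using M AE CF by auto
  ultimately show ?thesis by simp
qed

end
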